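(* Let $\Phi\triangleright\Gamma\vdash^{(b,e,m,f)}t:\sigma$ be a tight derivation of system $\mathscr{E}$ (i.e. $\mathrm{tight}(\Gamma)$ and $\mathrm{tight}(\sigma)$). Then $t\in\mathcal{M}$ if and only if $b=e=m=0$.
   Context: Pair pattern calculus: patterns $p,q ::= x\mid\langle p,q\rangle$ (linear); $\mathrm{var}(p)$ = variables of $p$; $p\# q$ means disjoint variables. Terms $t,u ::= x\mid\lambda p.t\mid\langle t,u\rangle\mid t\,u\mid t[p/u]$, $\mathrm{var}(p)$ bound in $t$ in $\lambda p.t$ and $t[p/u]$; terms modulo $\alpha$. Canonical forms $\mathcal{M} ::= \lambda p.\mathcal{M}\mid\langle t,t\rangle\mid\mathcal{M}[\langle p_1,p_2\rangle/\mathcal{N}]\mid\mathcal{N}$; pure canonical forms $\mathcal{N} ::= x\mid\mathcal{N}\,t\mid\mathcal{N}[\langle p_1,p_2\rangle/\mathcal{N}]$. System $\mathscr{E}$. Types: tight types $\mathtt{t} ::= \bullet_{\mathcal{N}}\mid\bullet_{\mathcal{M}}$; types $\sigma ::= \mathtt{t}\mid \mathcal{A}_1\times\mathcal{A}_2\mid \mathcal{A}\to\sigma$; multi-types $\mathcal{A} ::= [\sigma_k]_{k\in K}$ (finite, possibly empty $[\,]$). Contexts map variables to multi-types, $\mathrm{dom}(\Gamma)$ = variables with non-empty multi-type; $\wedge$ pointwise multiset union; $\Gamma|_p$ restriction to $\mathrm{var}(p)$; $\Gamma\setminus\mathrm{var}(p)$ removal. $\mathrm{tight}(\sigma)$ iff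 $\sigma\in\{\bullet_{\mathcal{N}},\bullet_{\mathcal{M}}\}$, extended elementwise to multi-types and contexts. Rules: (pat_v) $x:\mathcal{A}\Vdash^{(1,0,0)} x:\mathcal{A}$. (pat_×) from $\Gamma\Vdash^{(e_p,m_p,f_p)}p:\mathcal{A}$, $\Delta\Vdash^{(e_q,m_q,f_q)}q:\mathcal{B}$, $p\#q$ infer $\Gamma\wedge\Delta\Vdash^{(e_p+e_q,1+m_p+m_q,f_p+f_q)}\langle p,q\rangle:[\mathcal{A}\times\mathcal{B}]$. (pat_p) if $\mathrm{dom}(\Gamma)\subseteq\mathrm{var}(\langle p,q\rangle)$ and $\mathrm{tight}(\Gamma)$ then $\Gamma\Vdash^{(0,0,1)}\langle p,q\rangle:[\bullet_{\mathcal{N}}]$. (ax) $x:[\sigma]\vdash^{(0,0,0,0)}x:\sigma$. (abs) from $\Gamma\vdash^{(b,e,m,f)}t:\sigma$ and $\Gamma|_p\Vdash^{(e_p,m_p,f_p)}p:\mathcal{A}$ infer $\Gamma\setminus\mathrm{var}(p)\vdash^{(b+1,e+e_p,m+m_p,f+f_p)}\lambda p.t:\mathcal{A}\to\sigma$. (abs_p) from $\Gamma\vdash^{(b,e,m,f)}t:\mathtt{t}$ ($\mathtt{t}$ tight) and $\mathrm{tight}(\Gamma|_p)$ infer $\Gamma\setminus\mathrm{var}(p)\vdash^{(b,e,m,f+1)}\lambda p.t:\bullet_{\mathcal{M}}$. (many) from $(\Gamma_k\vdash^{(b_k,e_k,m_k,f_k)}t:\sigma_k)_{k\in K}$ infer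 $\wedge_k\Gamma_k\vdash^{(\sum b_k,\sum e_k,\sum m_k,\sum f_k)}t:[\sigma_k]_{k\in K}$. (app) from $\Gamma\vdash^{(b_t,e_t,m_t,f_t)}t:\mathcal{A}\to\sigma$, $\Delta\vdash^{(b_u,e_u,m_u,f_u)}u:\mathcal{A}$ infer $\Gamma\wedge\Delta\vdash^{(b_t+b_u,e_t+e_u,m_t+m_u,f_t+f_u)}t\,u:\sigma$. (app_p) from $\Gamma\vdash^{(b,e,m,f)}t:\bullet_{\mathcal{N}}$ infer $\Gamma\vdash^{(b,e,m,f+1)}t\,u:\bullet_{\mathcal{N}}$. (pair) from $\Gamma\vdash^{(b_t,e_t,m_t,f_t)}t:\mathcal{A}$, $\Delta\vdash^{(b_u,e_u,m_u,f_u)}u:\mathcal{B}$ infer $\Gamma\wedge\Delta\vdash^{(b_t+b_u,e_t+e_u,m_t+m_u,f_t+f_u)}\langle t,u\rangle:\mathcal{A}\times\mathcal{B}$. (pair_p) $\vdash^{(0,0,0,1)}\langle t,u\rangle:\bullet_{\mathcal{M}}$. (match) from $\Gamma\vdash^{(b_t,e_t,m_t,f_t)}t:\sigma$, $\Gamma|_p\Vdash^{(e_p,m_p,f_p)}p:\mathcal{A}$, $\Delta\vdash^{(b_u,e_u,m_u,f_u)}u:\mathcal{A}$ infer $(\Gamma\setminus\mathrm{var}(p))\wedge\Delta\vdash^{(b_t+b_u,e_t+e_u+e_p,m_t+m_u+m_p,f_t+f_u+f_p)}t[p/u]:\sigma$. A derivation of $\Gamma\vdash^{(b,e,m,f)}t:\sigma$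 is tight if $\mathrm{tight}(\Gamma)$ and $\mathrm{tight}(\sigma)$. *)

theory Defs
  imports Main "HOL-Library.Multiset"
begin

datatype 'v pat = PVar 'v | PPair "'v pat" "'v pat"

fun pvars :: "'v pat \<Rightarrow> 'v set" where
  "pvars (PVar x) = {x}"
| "pvars (PPair p q) = pvars p \<union> pvars q"

definition pdisj :: "'v pat \<Rightarrow> 'v pat \<Rightarrow> bool" where
  "pdisj p q \<longleftrightarrow> pvars p \<inter> pvars q = {}"

fun linear_pat :: "'v pat \<Rightarrow> bool" where
  "linear_pat (PVar x) = True"
| "linear_pat (PPair p q) = (linear_pat p \<and> linear_pat q \<and> pdisj p q)"

datatype 'v trm =
    Var 'v
  | Lam "'v pat" "'v trm"
  | Pair "'v trm" "'v trm"
  | App "'v trm" "'v trm"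
  | Sub "'v trm" "'v pat" "'v trm"   (* t[p/u] *)

fun linear_trm :: "'v trm \<Rightarrow> bool" where
  "linear_trm (Var x) = True"
| "linear_trm (Lam p t) = (linear_pat p \<and> linear_trm t)"
| "linear_trm (Pair t u) = (linear_trm t \<and> linear_trm u)"
| "linear_trm (App t u) = (linear_trm t \<and> linear_trm u)"
| "linear_trm (Sub t p u) = (linear_pat p \<and> linear_trm t \<and> linear_trm u)"

inductive canM :: "'v trm \<Rightarrow> bool" and canN :: "'v trm \<Rightarrow> bool" where
  M_lam: "canM t \<Longrightarrow> canM (Lam p t)"
| M_pair: "canM (Pair t u)"
| M_sub: "canM t \<Longrightarrow> canN u \<Longrightarrow> canM (Sub t (PPair p1 p2) u)"
| M_N: "canN t \<Longrightarrow> canM t"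
| N_var: "canN (Var x)"
| N_app: "canN t \<Longrightarrow> canN (App t u)"
| N_sub: "canN t \<Longrightarrow> canN u \<Longrightarrow> canN (Sub t (PPair p1 p2) u)"

datatype ty = TN | TM | Prod "ty multiset" "ty multiset" | Arr "ty multiset" ty

definition tight :: "ty \<Rightarrow> bool" where
  "tight \<sigma> \<longleftrightarrow> \<sigma> = TN \<or> \<sigma> = TM"

definition tight_m :: "ty multiset \<Rightarrow> bool" where
  "tight_m A \<longleftrightarrow> (\<forall>\<sigma>\<in>#A. tight \<sigma>)"

type_synonym 'v ctx = "'v \<Rightarrow> ty multiset"

definition ctx_empty :: "'v ctx" where
  "ctx_empty = (\<lambda>_. {#})"

definition ctx_single :: "'v \<Rightarrow> ty multiset \<Rightarrow> 'v ctx" where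
  "ctx_single x A = (\<lambda>y. if y = x then A else {#})"

definition ctx_union :: "'v ctx \<Rightarrow> 'v ctx \<Rightarrow> 'v ctx" where
  "ctx_union \<Gamma> \<Delta> = (\<lambda>x. \<Gamma> x + \<Delta> x)"

definition ctx_dom :: "'v ctx \<Rightarrow> 'v set" where
  "ctx_dom \<Gamma> = {x. \<Gamma> x \<noteq> {#}}"

definition ctx_restr :: "'v ctx \<Rightarrow> 'v pat \<Rightarrow> 'v ctx" where
  "ctx_restr \<Gamma> p = (\<lambda>x. if x \<in> pvars p then \<Gamma> x else {#})"

definition ctx_remove :: "'v ctx \<Rightarrow> 'v pat \<Rightarrow> 'v ctx" where
  "ctx_remove \<Gamma> p = (\<lambda>x. if x \<in> pvars p then {#} else \<Gamma> x)"

definition tight_ctx :: "'v ctx \<Rightarrow> bool" where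
  "tight_ctx \<Gamma> \<longleftrightarrow> (\<forall>x. tight_m (\<Gamma> x))"

inductive pty :: "'v ctx \<Rightarrow> nat \<Rightarrow> nat \<Rightarrow> nat \<Rightarrow> 'v pat \<Rightarrow> ty multiset \<Rightarrow> bool" where
  pat_v: "pty (ctx_single x A) 1 0 0 (PVar x) A"
| pat_pair: "pty \<Gamma> ep mp fp p A \<Longrightarrow> pty \<Delta> eq mq fq q B \<Longrightarrow> pdisj p q \<Longrightarrow>
     pty (ctx_union \<Gamma> \<Delta>) (ep + eq) (1 + mp + mq) (fp + fq) (PPair p q) {# Prod A B #}"
| pat_p: "ctx_dom \<Gamma> \<subseteq> pvars (PPair p q) \<Longrightarrow> tight_ctx \<Gamma> \<Longrightarrow>
     pty \<Gamma> 0 0 1 (PPair p q) {# TN #}"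

inductive tyj :: "'v ctx \<Rightarrow> nat \<Rightarrow> nat \<Rightarrow> nat \<Rightarrow> nat \<Rightarrow> 'v trm \<Rightarrow> ty \<Rightarrow> bool"
  and mtyj :: "'v ctx \<Rightarrow> nat \<Rightarrow> nat \<Rightarrow> nat \<Rightarrow> nat \<Rightarrow> 'v trm \<Rightarrow> ty multiset \<Rightarrow> bool" where
  ax: "tyj (ctx_single x {#\<sigma>#}) 0 0 0 0 (Var x) \<sigma>"
| abs: "tyj \<Gamma> b e m f t \<sigma> \<Longrightarrow> pty (ctx_restr \<Gamma> p) ep mp fp p A \<Longrightarrow>
     tyj (ctx_remove \<Gamma> p) (b + 1) (e + ep) (m + mp) (f + fp) (Lam p t) (Arr A \<sigma>)"
| abs_p: "tyj \<Gamma> b e m f t \<tau> \<Longrightarrow> tight \<tau> \<Longrightarrow> tight_ctx (ctx_restr \<Gamma> p) \<Longrightarrow>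
     tyj (ctx_remove \<Gamma> p) b e m (f + 1) (Lam p t) TM"
| many_nil: "mtyj ctx_empty 0 0 0 0 t {#}"
| many_add: "tyj \<Gamma> b e m f t \<sigma> \<Longrightarrow> mtyj \<Delta> b' e' m' f' t A \<Longrightarrow>
     mtyj (ctx_union \<Gamma> \<Delta>) (b + b') (e + e') (m + m') (f + f') t (add_mset \<sigma> A)"
| app: "tyj \<Gamma> bt et mt ft t (Arr A \<sigma>) \<Longrightarrow> mtyj \<Delta> bu eu mu fu u A \<Longrightarrow>
     tyj (ctx_union \<Gamma> \<Delta>) (bt + bu) (et + eu) (mt + mu) (ft + fu) (App t u) \<sigma>"
| app_p: "tyj \<Gamma> b e m f t TN \<Longrightarrow> tyj \<Gamma> b e m (f + 1) (App t u) TN"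
| pair: "mtyj \<Gamma> bt et mt ft t A \<Longrightarrow> mtyj \<Delta> bu eu mu fu u B \<Longrightarrow>
     tyj (ctx_union \<Gamma> \<Delta>) (bt + bu) (et + eu) (mt + mu) (ft + fu) (Pair t u) (Prod A B)"
| pair_p: "tyj ctx_empty 0 0 0 1 (Pair t u) TM"
| match: "tyj \<Gamma> bt et mt ft t \<sigma> \<Longrightarrow> pty (ctx_restr \<Gamma> p) ep mp fp p A \<Longrightarrow>
     mtyj \<Delta> bu eu mu fu u A \<Longrightarrow>
     tyj (ctx_union (ctx_remove \<Gamma> p) \<Delta>) (bt + bu) (et + eu + ep) (mt + mu + mp) (ft + fu + fp)
         (Sub t p u) \<sigma>"

end

theory Submission
  imports Defs
begin

lemma tight_m_plus[simp]: "tight_m (A + B) \<longleftrightarrow> tight_m A \<and> tight_m B"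
  by (auto simp: tight_m_def)

lemma tight_ctx_union[simp]: "tight_ctx (ctx_union G D) \<longleftrightarrow> tight_ctx G \<and> tight_ctx D"
  by (auto simp: tight_ctx_def ctx_union_def)

lemma tight_ctx_split: "tight_ctx G \<longleftrightarrow> tight_ctx (ctx_remove G p) \<and> tight_ctx (ctx_restr G p)"
  unfolding tight_ctx_def ctx_remove_def ctx_restr_def
  by (metis (full_types) tight_m_def empty_iff set_mset_empty)

lemma tight_ctx_single[simp]: "tight_ctx (ctx_single x A) \<longleftrightarrow> tight_m A"
  by (auto simp: tight_ctx_def ctx_single_def tight_m_def)

lemma ctx_union_empty[simp]: "ctx_union G ctx_empty = G"
  by (simp add: ctx_union_def ctx_empty_def)

inductive_cases tyj_VarE: "tyj G b e m f (Var x) s"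
inductive_cases tyj_LamE: "tyj G b e m f (Lam p t) s"
inductive_cases tyj_PairE: "tyj G b e m f (Pair t u) s"
inductive_cases tyj_AppE: "tyj G b e m f (App t u) s"
inductive_cases tyj_SubE: "tyj G b e m f (Sub t p u) s"
inductive_cases mtyj_nilE: "mtyj G b e m f t {#}"
inductive_cases mtyj_addE: "mtyj G b e m f t (add_mset s A)"
inductive_cases pty_PPairE: "pty G e m f (PPair p q) A"
inductive_cases pty_PVarE: "pty G e m f (PVar x) A"

lemma mtyj_single:
  assumes "mtyj D b e m f u {#s#}"
  shows "tyj D b e m f u s"
  using assms by (auto elim!: mtyj_addE mtyj_nilE)

lemma not_tight_Arr[simp]: "\<not> tight (Arr A s)" and not_tight_Prod[simp]: "\<not> tight (Prod A B)"
  by (auto simp: tight_def)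

lemma tight_m_single[simp]: "tight_m {#s#} \<longleftrightarrow> tight s"
  by (simp add: tight_m_def)

lemma lemN:
  "canN t \<Longrightarrow> tyj G b e m f t s \<Longrightarrow> tight_ctx G \<Longrightarrow> tight s \<and> b = 0 \<and> e = 0 \<and> m = 0"
proof (induction t arbitrary: G b e m f s)
  case (Var x)
  then show ?case by (auto elim!: tyj_VarE)
next
  case (Lam p t)
  then show ?case by (auto elim: canN.cases)
next
  case (Pair t u)
  then show ?case by (auto elim: canN.cases)
next
  case (App t u)
  from App.prems(1) have ct: "canN t" by (cases rule: canN.cases) auto
  show ?case
  proof (rule tyj_AppE[OF App.prems(2)])
    fix G1 bt et mt ft A D bu eu mu fu
    assume 1: "G = ctx_union G1 D" "tyj G1 bt et mt ft t (Arr A s)"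
    with App.IH(1)[OF ct] App.prems(3) show ?thesis by fastforce
  next
    fix f' assume 2: "f = Suc f'" "s = TN" "tyj G b e m f' t TN"
    with App.IH(1)[OF ct] App.prems(3) show ?thesis by (auto simp: tight_def)
  qed
next
  case (Sub t p u)
  from Sub.prems(1) obtain p1 p2 where pp: "p = PPair p1 p2" and ct: "canN t" and cu: "canN u"
    by (cases rule: canN.cases) auto
  show ?case
  proof (rule tyj_SubE[OF Sub.prems(2)])
    fix G1 bt et mt ft ep mp fp A D bu eu mu fu
    assume 1: "G = ctx_union (ctx_remove G1 p) D" "b = bt + bu" "e = et + eu + ep"
       "m = mt + mu + mp" "f = ft + fu + fp" "tyj G1 bt et mt ft t s"
       "pty (ctx_restr G1 p) ep mp fp p A" "mtyj D bu eu mu fu u A"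
    have tD: "tight_ctx D" and tR: "tight_ctx (ctx_remove G1 p)" using 1 Sub.prems(3) by auto
    show ?thesis
    proof (rule pty_PPairE[OF 1(7)[unfolded pp]])
      fix G2 epx mpx fpx A1 D2 eq mq fq B
      assume "A = {#Prod A1 B#}"
      then have "tyj D bu eu mu fu u (Prod A1 B)" using 1 mtyj_single by auto
      from Sub.IH(2)[OF cu this tD] show ?thesis by simp
    next
      assume 2: "ep = 0" "mp = 0" "A = {#TN#}"
        "tight_ctx (ctx_restr G1 (PPair p1 p2))"
      then have tu: "tyj D bu eu mu fu u TN" using 1 mtyj_single by auto
      have "tight_ctx G1" using tR 2 tight_ctx_split[of G1 p] pp by simp
      from Sub.IH(1)[OF ct 1(6) this] Sub.IH(2)[OF cu tu tD] 1(2-4) 2(1,2) show ?thesis by simp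
    qed
  qed
qed


lemma lemM:
  "canM t \<Longrightarrow> tyj G b e m f t s \<Longrightarrow> tight_ctx G \<Longrightarrow> tight s \<Longrightarrow> b = 0 \<and> e = 0 \<and> m = 0"
proof (induction t arbitrary: G b e m f s)
  case (Var x)
  then show ?case by (auto elim!: tyj_VarE)
next
  case (Lam p t)
  show ?case
  proof (cases "canN (Lam p t)")
    case True then show ?thesis using lemN Lam.prems by blast
  next
    case False
    with Lam.prems(1) have ct: "canM t" by (cases rule: canM.cases) auto
    show ?thesis
    proof (rule tyj_LamE[OF Lam.prems(2)])
      fix G1 b' e' m' f' s' ep mp fp A
      assume "s = Arr A s'" then show ?thesis using Lam.prems(4) by simp
    next
      fix G1 f' t'
      assume 1: "G = ctx_remove G1 p" "f = Suc f'" "s = TM" "tyj G1 b e m f' t t'" "tight t'"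
        "tight_ctx (ctx_restr G1 p)"
      then have "tight_ctx G1" using Lam.prems(3) tight_ctx_split[of G1 p] by simp
      from Lam.IH[OF ct 1(4) this 1(5)] show ?thesis .
    qed
  qed
next
  case (Pair t u)
  show ?case
    by (rule tyj_PairE[OF Pair.prems(2)]) (use Pair.prems(4) in auto)
next
  case (App t u)
  have "canN (App t u)" using App.prems(1) by (cases rule: canM.cases) auto
  then show ?case using lemN App.prems by blast
next
  case (Sub t p u)
  show ?case
  proof (cases "canN (Sub t p u)")
    case True then show ?thesis using lemN Sub.prems by blast
  next
    case False
    with Sub.prems(1) obtain p1 p2 where pp: "p = PPair p1 p2" and ct: "canM t" and cu: "canN u"
      by (cases rule: canM.cases) auto
    show ?thesis
    proof (rule tyj_SubE[OF Sub.prems(2)])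
      fix G1 bt et mt ft ep mp fp A D bu eu mu fu
      assume 1: "G = ctx_union (ctx_remove G1 p) D" "b = bt + bu" "e = et + eu + ep"
         "m = mt + mu + mp" "f = ft + fu + fp" "tyj G1 bt et mt ft t s"
         "pty (ctx_restr G1 p) ep mp fp p A" "mtyj D bu eu mu fu u A"
      have tD: "tight_ctx D" and tR: "tight_ctx (ctx_remove G1 p)" using 1 Sub.prems(3) by auto
      show ?thesis
      proof (rule pty_PPairE[OF 1(7)[unfolded pp]])
        fix G2 epx mpx fpx A1 D2 eq mq fq B
        assume "A = {#Prod A1 B#}"
        then have "tyj D bu eu mu fu u (Prod A1 B)" using 1 mtyj_single by auto
        from lemN[OF cu this tD] show ?thesis by simp
      next
        assume 2: "ep = 0" "mp = 0" "A = {#TN#}"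
          "tight_ctx (ctx_restr G1 (PPair p1 p2))"
        then have tu: "tyj D bu eu mu fu u TN" using 1 mtyj_single by auto
        have "tight_ctx G1" using tR 2 tight_ctx_split[of G1 p] pp by simp
        from Sub.IH(1)[OF ct 1(6) this Sub.prems(4)] lemN[OF cu tu tD] 1(2-4) 2(1,2) show ?thesis by simp
      qed
    qed
  qed
qed

lemma lemC:
  "tyj G b e m f t s \<Longrightarrow> tight_ctx G \<Longrightarrow> b = 0 \<Longrightarrow> e = 0 \<Longrightarrow> m = 0 \<Longrightarrow>
    (\<forall>A \<tau>. s \<noteq> Arr A \<tau>) \<and> (s = TN \<longrightarrow> canN t) \<and> (s = TM \<longrightarrow> canM t)"
proof (induction t arbitrary: G b e m f s)
  case (Var x)
  then show ?case by (auto elim!: tyj_VarE intro: canM_canN.intros simp: tight_def)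
next
  case (Lam p t)
  show ?case
  proof (rule tyj_LamE[OF Lam.prems(1)])
    fix G1 b' e' m' f' s' ep mp fp A
    assume "b = Suc b'" then show ?thesis using Lam.prems by simp
  next
    fix G1 f' t'
    assume 1: "G = ctx_remove G1 p" "f = Suc f'" "s = TM" "tyj G1 b e m f' t t'" "tight t'"
      "tight_ctx (ctx_restr G1 p)"
    then have "tight_ctx G1" using Lam.prems(2) tight_ctx_split[of G1 p] by simp
    from Lam.IH[OF 1(4) this Lam.prems(3-5)] 1(5) have "canM t"
      by (auto simp: tight_def intro: canM_canN.intros)
    then show ?thesis using 1(3) by (auto intro: canM_canN.intros)
  qed
next
  case (Pair t u)
  show ?case
    by (rule tyj_PairE[OF Pair.prems(1)]) (auto intro: canM_canN.intros)
next
  case (App t u)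
  show ?case
  proof (rule tyj_AppE[OF App.prems(1)])
    fix G1 bt et mt ft A D bu eu mu fu
    assume 1: "G = ctx_union G1 D" "b = bt + bu" "e = et + eu" "m = mt + mu"
       "f = ft + fu" "tyj G1 bt et mt ft t (Arr A s)"
    from App.IH(1)[OF 1(6)] 1 App.prems show ?thesis by simp
  next
    fix f' assume 2: "f = Suc f'" "s = TN" "tyj G b e m f' t TN"
    from App.IH(1)[OF 2(3) App.prems(2-5)] 2 show ?thesis by (auto intro: canM_canN.intros)
  qed
next
  case (Sub t p u)
  show ?case
  proof (rule tyj_SubE[OF Sub.prems(1)])
    fix G1 bt et mt ft ep mp fp A D bu eu mu fu
    assume 1: "G = ctx_union (ctx_remove G1 p) D" "b = bt + bu" "e = et + eu + ep"
       "m = mt + mu + mp" "f = ft + fu + fp" "tyj G1 bt et mt ft t s"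
       "pty (ctx_restr G1 p) ep mp fp p A" "mtyj D bu eu mu fu u A"
    have tD: "tight_ctx D" and tR: "tight_ctx (ctx_remove G1 p)" using 1 Sub.prems(2) by auto
    have z: "bt = 0" "bu = 0" "et = 0" "eu = 0" "ep = 0" "mt = 0" "mu = 0" "mp = 0"
      using 1 Sub.prems by auto
    show ?thesis
    proof (cases p)
      case (PVar x)
      from 1(7)[unfolded PVar] z show ?thesis by (auto elim: pty_PVarE)
    next
      case (PPair p1 p2)
      show ?thesis
      proof (rule pty_PPairE[OF 1(7)[unfolded PPair]])
        fix G2 epx mpx fpx A1 D2 eq mq fq B
        assume "mp = Suc (mpx + mq)" then show ?thesis using z by simp
      next
        assume 2: "ep = 0" "mp = 0" "A = {#TN#}"
          "tight_ctx (ctx_restr G1 (PPair p1 p2))"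
        then have tu: "tyj D bu eu mu fu u TN" using 1 mtyj_single by auto
        from Sub.IH(2)[OF tu tD] z have cu: "canN u" by simp
        have "tight_ctx G1" using tR 2 tight_ctx_split[of G1 p] PPair by simp
        from Sub.IH(1)[OF 1(6) this] z cu PPair show ?thesis
          by (auto intro: canM_canN.intros)
      qed
    qed
  qed
qed

theorem lemma4:
  fixes \<Gamma> :: "'v ctx" and t :: "'v trm"
  assumes "linear_trm t"
    and "tyj \<Gamma> b e m f t \<sigma>"
    and "tight_ctx \<Gamma>" and "tight \<sigma>"
  shows "canM t \<longleftrightarrow> (b = 0 \<and> e = 0 \<and> m = 0)"
proof
  assume "canM t" then show "b = 0 \<and> e = 0 \<and> m = 0" using lemM assms(2-4) by blast
next
  assume "b = 0 \<and> e = 0 \<and> m = 0"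
  with lemC[OF assms(2,3)] assms(4) show "canM t"
    by (auto simp: tight_def intro: canM_canN.intros)
qed

end
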